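(* Let $\theta\in[0,1)$ and $\alpha_1,\dots,\alpha_T>0$, $\beta_1,\dots,\beta_T>0$ with $\sum_t\alpha_t=\sum_t\beta_t=1$, and let $\gamma_t=\beta_t/\alpha_t$. For $\eta_1\ge0$ define $$\Upsilon_{\mathrm{market}}(\eta_1)=1+\theta^2\Big(\sum_{t=1}^T\frac{\beta_t^2}{\alpha_t}-1\Big)+\eta_1\sum_{t=1}^T\frac{\alpha_t(1-\theta(1-\gamma_t))^2(1-\gamma_t)}{1+\eta_1\gamma_t}.$$ Then $\Upsilon_{\mathrm{market}}$ is decreasing on $[0,\frac{\theta}{1-\theta}]$ and increasing on $[\frac{\theta}{1-\theta},\infty)$, and $$\Upsilon_{\mathrm{market}}(0)=1+\theta^2\Big(\sum_t\frac{\beta_t^2}{\alpha_t}-1\Big),\quad \Upsilon_{\mathrm{market}}\Big(\frac{\theta}{1-\theta}\Big)=1,\quad \lim_{\eta_1\to\infty}\Upsilon_{\mathrm{market}}(\eta_1)=1+(1-\theta)^2\Big(\sum_{t=1}^T\frac{\alpha_t^2}{\beta_t}-1\Big).$$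
   Context: $\Upsilon_{\mathrm{market}}(\eta_1)$ is the ratio of the expected cost of the separable schedule $(\alpha_t(1-\theta)+\beta_t\theta)\mathbf{x}_0$ to the optimal expected cost when the liquidated portfolio $\mathbf{x}_0$ equals the index portfolio $\mathbf{w}_1$, with $\eta_1=\bar\psi_{\mathrm{f},1}\mathbf{w}_1^\top\bar{\boldsymbol{\Psi}}_{\mathrm{id}}^{-1}\mathbf{w}_1$ the ratio of index-fund to single-stock liquidity along $\mathbf{w}_1$. *)

theory Defs
  imports Complex_Main
begin

definition upsilon_market ::
  "nat \<Rightarrow> (nat \<Rightarrow> real) \<Rightarrow> (nat \<Rightarrow> real) \<Rightarrow> real \<Rightarrow> real \<Rightarrow> real" where
  "upsilon_market T \<alpha> \<beta> \<theta> \<eta> =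
     1 + \<theta>\<^sup>2 * ((\<Sum>t=1..T. (\<beta> t)\<^sup>2 / \<alpha> t) - 1)
     + \<eta> * (\<Sum>t=1..T. \<alpha> t * (1 - \<theta> * (1 - \<beta> t / \<alpha> t))\<^sup>2 * (1 - \<beta> t / \<alpha> t)
                         / (1 + \<eta> * (\<beta> t / \<alpha> t)))"

end

theory Submission imports Defs begin
lemma pcmp: assumes "(g::real)>0" "0\<le>x" "0 \<le> e"
  shows "(1+e)/(1+x) - (1+e*g)/(1+x*g) = (e-x)*(1-g)/((1+x)*(1+x*g))"
proof -
  have h1: "1+x > 0" "1+x*g>0" using assms by (auto intro: add_pos_nonneg)
  show ?thesis using h1 by (simp add: divide_simps) (simp add: algebra_simps)
qed
lemma ppos: "(g::real)>0 \<Longrightarrow> 0\<le>x \<Longrightarrow> 0 < (1+x)*(1+x*g)"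
  by (simp add: add_pos_nonneg)
lemma key: assumes "(g::real)>0" "0\<le>x" "x\<le>e" "0\<le>y" "y\<le>e"
  shows "(1-g)*((1+e*g)/(1+x*g)*((1+e*g)/(1+y*g))) \<le> (1-g)*((1+e)/(1+x)*((1+e)/(1+y)))"
proof (cases "g \<le> 1")
  case True
  have "0 \<le> (e-x)*(1-g)/((1+x)*(1+x*g))" using assms True by simp
  hence a: "(1+e*g)/(1+x*g) \<le> (1+e)/(1+x)" using pcmp[of g x e] assms by linarith
  have "0 \<le> (e-y)*(1-g)/((1+y)*(1+y*g))" using assms True by simp
  hence b: "(1+e*g)/(1+y*g) \<le> (1+e)/(1+y)" using pcmp[of g y e] assms by linarith
  have "(1+e*g)/(1+x*g)*((1+e*g)/(1+y*g)) \<le> (1+e)/(1+x)*((1+e)/(1+y))"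
    by (rule mult_mono[OF a b]) (use assms in auto)
  thus ?thesis using True by (intro mult_left_mono) auto
next
  case False
  have "0 \<ge> (e-x)*(1-g)/((1+x)*(1+x*g))" using assms False
    using ppos[of g x] ppos[of g y] by (intro divide_nonpos_pos mult_nonneg_nonpos) auto
  hence a: "(1+e*g)/(1+x*g) \<ge> (1+e)/(1+x)" using pcmp[of g x e] assms by linarith
  have "0 \<ge> (e-y)*(1-g)/((1+y)*(1+y*g))" using assms False
    using ppos[of g x] ppos[of g y] by (intro divide_nonpos_pos mult_nonneg_nonpos) auto
  hence b: "(1+e*g)/(1+y*g) \<ge> (1+e)/(1+y)" using pcmp[of g y e] assms by linarith
  have "(1+e*g)/(1+x*g)*((1+e*g)/(1+y*g)) \<ge> (1+e)/(1+x)*((1+e)/(1+y))"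
    by (rule mult_mono[OF a b]) (use assms in auto)
  thus ?thesis using False by (intro mult_left_mono_neg) auto
qed
lemma key2: assumes "(g::real)>0" "0\<le>e" "e\<le>x" "e\<le>y"
  shows "(1-g)*((1+e*g)/(1+x*g)*((1+e*g)/(1+y*g))) \<ge> (1-g)*((1+e)/(1+x)*((1+e)/(1+y)))"
proof (cases "g \<le> 1")
  case True
  have "0 \<ge> (e-x)*(1-g)/((1+x)*(1+x*g))" using assms True
    using ppos[of g x] ppos[of g y] by (intro divide_nonpos_pos mult_nonpos_nonneg) auto
  hence a: "(1+e*g)/(1+x*g) \<ge> (1+e)/(1+x)" using pcmp[of g x e] assms by linarith
  have "0 \<ge> (e-y)*(1-g)/((1+y)*(1+y*g))" using assms True
    using ppos[of g x] ppos[of g y] by (intro divide_nonpos_pos mult_nonpos_nonneg) auto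
  hence b: "(1+e*g)/(1+y*g) \<ge> (1+e)/(1+y)" using pcmp[of g y e] assms by linarith
  have "(1+e*g)/(1+x*g)*((1+e*g)/(1+y*g)) \<ge> (1+e)/(1+x)*((1+e)/(1+y))"
    by (rule mult_mono[OF a b]) (use assms in auto)
  thus ?thesis using True by (intro mult_left_mono) auto
next
  case False
  have "0 \<le> (e-x)*(1-g)/((1+x)*(1+x*g))" using assms False
    using ppos[of g x] ppos[of g y] by (intro divide_nonneg_pos mult_nonpos_nonpos) auto
  hence a: "(1+e*g)/(1+x*g) \<le> (1+e)/(1+x)" using pcmp[of g x e] assms by linarith
  have "0 \<le> (e-y)*(1-g)/((1+y)*(1+y*g))" using assms False
    using ppos[of g x] ppos[of g y] by (intro divide_nonneg_pos mult_nonpos_nonpos) auto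
  hence b: "(1+e*g)/(1+y*g) \<le> (1+e)/(1+y)" using pcmp[of g y e] assms by linarith
  have "(1+e*g)/(1+x*g)*((1+e*g)/(1+y*g)) \<le> (1+e)/(1+x)*((1+e)/(1+y))"
    by (rule mult_mono[OF a b]) (use assms in auto)
  thus ?thesis using False by (intro mult_left_mono_neg) auto
qed
theorem mainTheorem9:
  fixes T :: nat and \<alpha> \<beta> :: "nat \<Rightarrow> real" and \<theta> :: real
  assumes "0 \<le> \<theta>" and "\<theta> < 1"
    and "\<And>t. t \<in> {1..T} \<Longrightarrow> \<alpha> t > 0"
    and "\<And>t. t \<in> {1..T} \<Longrightarrow> \<beta> t > 0"
    and "(\<Sum>t=1..T. \<alpha> t) = 1" and "(\<Sum>t=1..T. \<beta> t) = 1"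
  shows "(\<forall>x\<in>{0..\<theta>/(1-\<theta>)}. \<forall>y\<in>{0..\<theta>/(1-\<theta>)}. x \<le> y \<longrightarrow>
            upsilon_market T \<alpha> \<beta> \<theta> y \<le> upsilon_market T \<alpha> \<beta> \<theta> x) \<and>
      (\<forall>x\<in>{\<theta>/(1-\<theta>)..}. \<forall>y\<in>{\<theta>/(1-\<theta>)..}. x \<le> y \<longrightarrow>
            upsilon_market T \<alpha> \<beta> \<theta> x \<le> upsilon_market T \<alpha> \<beta> \<theta> y) \<and>
      upsilon_market T \<alpha> \<beta> \<theta> 0 = 1 + \<theta>\<^sup>2 * ((\<Sum>t=1..T. (\<beta> t)\<^sup>2 / \<alpha> t) - 1) \<and>
      upsilon_market T \<alpha> \<beta> \<theta> (\<theta>/(1-\<theta>)) = 1 \<and>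
      ((\<lambda>\<eta>. upsilon_market T \<alpha> \<beta> \<theta> \<eta>) \<longlongrightarrow>
            1 + (1-\<theta>)\<^sup>2 * ((\<Sum>t=1..T. (\<alpha> t)\<^sup>2 / \<beta> t) - 1)) at_top"
proof -
  note A = assms
  define g where "g t = \<beta> t / \<alpha> t" for t
  define e where "e = \<theta>/(1-\<theta>)"
  define C where "C = 1 + \<theta>\<^sup>2 * ((\<Sum>t=1..T. (\<beta> t)\<^sup>2 / \<alpha> t) - 1)"
  define tm where "tm \<eta> t = \<alpha> t * (1 - \<theta> * (1 - g t))\<^sup>2 * (1 - g t) / (1 + \<eta> * g t)" for \<eta> t
  have U: "upsilon_market T \<alpha> \<beta> \<theta> \<eta> = C + (\<Sum>t=1..T. \<eta> * tm \<eta> t)" for \<eta>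
    unfolding upsilon_market_def C_def tm_def g_def by (simp add: sum_distrib_left)
  have gpos: "g t > 0" if "t \<in> {1..T}" for t using A(3,4)[OF that] by (simp add: g_def)
  have e0: "e \<ge> 0" using A(1,2) by (simp add: e_def)
  have ce: "1 - \<theta> * (1 - g t) = (1-\<theta>) * (1 + e * g t)" for t
    using A(2) by (simp add: e_def field_simps)
  have s0: "(\<Sum>t=1..T. \<alpha> t * (1 - g t)) = 0"
  proof -
    have "(\<Sum>t=1..T. \<alpha> t * (1 - g t)) = (\<Sum>t=1..T. \<alpha> t - \<beta> t)"
    proof (rule sum.cong[OF refl])
      fix t assume t: "t \<in> {1..T}"
      show "\<alpha> t * (1 - g t) = \<alpha> t - \<beta> t" using A(3)[OF t] by (simp add: g_def field_simps)
    qed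
    also have "\<dots> = 0" using A(5,6) by (simp add: sum_subtractf)
    finally show ?thesis .
  qed
  have diff: "upsilon_market T \<alpha> \<beta> \<theta> y - upsilon_market T \<alpha> \<beta> \<theta> x =
     (\<Sum>t=1..T. (1-\<theta>)\<^sup>2*(y-x)*\<alpha> t * ((1-g t)*((1+e*g t)/(1+x*g t)*((1+e*g t)/(1+y*g t)))))"
    if "x \<ge> 0" "y \<ge> 0" for x y
  proof -
    have "upsilon_market T \<alpha> \<beta> \<theta> y - upsilon_market T \<alpha> \<beta> \<theta> x = (\<Sum>t=1..T. y * tm y t - x * tm x t)"
      by (simp add: U sum_subtractf)
    also have "\<dots> = (\<Sum>t=1..T. (1-\<theta>)\<^sup>2*(y-x)*\<alpha> t * ((1-g t)*((1+e*g t)/(1+x*g t)*((1+e*g t)/(1+y*g t)))))"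
    proof (rule sum.cong[OF refl])
      fix t assume t: "t \<in> {1..T}"
      have p: "1 + x * g t > 0" "1 + y * g t > 0" using gpos[OF t] that by (auto intro: add_pos_nonneg)
      show "y * tm y t - x * tm x t = (1-\<theta>)\<^sup>2*(y-x)*\<alpha> t * ((1-g t)*((1+e*g t)/(1+x*g t)*((1+e*g t)/(1+y*g t))))"
        unfolding tm_def ce using p by (simp add: divide_simps power2_eq_square) (simp add: algebra_simps)
    qed
    finally show ?thesis .
  qed
  have P1: "upsilon_market T \<alpha> \<beta> \<theta> y \<le> upsilon_market T \<alpha> \<beta> \<theta> x"
    if "0 \<le> x" "x \<le> e" "0 \<le> y" "y \<le> e" "x \<le> y" for x y
  proof -
    define H where "H = (1+e)/(1+x)*((1+e)/(1+y))"
    have "(\<Sum>t=1..T. (1-\<theta>)\<^sup>2*(y-x)*\<alpha> t * ((1-g t)*((1+e*g t)/(1+x*g t)*((1+e*g t)/(1+y*g t)))))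
       \<le> (\<Sum>t=1..T. (1-\<theta>)\<^sup>2*(y-x)*H*(\<alpha> t * (1-g t)))"
    proof (rule sum_mono)
      fix t assume t: "t \<in> {1..T}"
      have "(1-\<theta>)\<^sup>2*(y-x)*\<alpha> t * ((1-g t)*((1+e*g t)/(1+x*g t)*((1+e*g t)/(1+y*g t))))
          \<le> (1-\<theta>)\<^sup>2*(y-x)*\<alpha> t * ((1-g t)*H)"
        unfolding H_def using key[OF gpos[OF t] that(1-4)] that(5) A(3)[OF t]
        by (intro mult_left_mono[of _ _ "(1-\<theta>)\<^sup>2*(y-x)*\<alpha> t"]) auto
      thus "(1-\<theta>)\<^sup>2*(y-x)*\<alpha> t * ((1-g t)*((1+e*g t)/(1+x*g t)*((1+e*g t)/(1+y*g t))))
          \<le> (1-\<theta>)\<^sup>2*(y-x)*H*(\<alpha> t * (1-g t))" by (simp add: algebra_simps)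
    qed
    also have "\<dots> = 0" unfolding sum_distrib_left[symmetric] s0 by simp
    finally show ?thesis using diff[OF that(1,3)] by linarith
  qed
  have P2: "upsilon_market T \<alpha> \<beta> \<theta> x \<le> upsilon_market T \<alpha> \<beta> \<theta> y"
    if "e \<le> x" "e \<le> y" "x \<le> y" for x y
  proof -
    have x0: "x \<ge> 0" "y \<ge> 0" using that e0 by auto
    define H where "H = (1+e)/(1+x)*((1+e)/(1+y))"
    have "(\<Sum>t=1..T. (1-\<theta>)\<^sup>2*(y-x)*\<alpha> t * ((1-g t)*((1+e*g t)/(1+x*g t)*((1+e*g t)/(1+y*g t)))))
       \<ge> (\<Sum>t=1..T. (1-\<theta>)\<^sup>2*(y-x)*H*(\<alpha> t * (1-g t)))"
    proof (rule sum_mono)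
      fix t assume t: "t \<in> {1..T}"
      have "(1-\<theta>)\<^sup>2*(y-x)*\<alpha> t * ((1-g t)*((1+e*g t)/(1+x*g t)*((1+e*g t)/(1+y*g t))))
          \<ge> (1-\<theta>)\<^sup>2*(y-x)*\<alpha> t * ((1-g t)*H)"
        unfolding H_def using key2[OF gpos[OF t] e0 that(1,2)] that(3) A(3)[OF t]
        by (intro mult_left_mono[of _ _ "(1-\<theta>)\<^sup>2*(y-x)*\<alpha> t"]) auto
      thus "(1-\<theta>)\<^sup>2*(y-x)*\<alpha> t * ((1-g t)*((1+e*g t)/(1+x*g t)*((1+e*g t)/(1+y*g t))))
          \<ge> (1-\<theta>)\<^sup>2*(y-x)*H*(\<alpha> t * (1-g t))" by (simp add: algebra_simps)
    qed
    also have "(\<Sum>t=1..T. (1-\<theta>)\<^sup>2*(y-x)*H*(\<alpha> t * (1-g t))) = 0" unfolding sum_distrib_left[symmetric] s0 by simp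
    finally show ?thesis using diff[OF x0] by linarith
  qed
  have V0: "upsilon_market T \<alpha> \<beta> \<theta> 0 = C" by (simp add: U)
  have Ve: "upsilon_market T \<alpha> \<beta> \<theta> e = 1"
  proof -
    have "(\<Sum>t=1..T. e * tm e t) = (\<Sum>t=1..T. \<theta> * (\<alpha> t - \<beta> t) - \<theta>\<^sup>2 * ((\<beta> t)\<^sup>2 / \<alpha> t - 2 * \<beta> t + \<alpha> t))"
    proof (rule sum.cong[OF refl])
      fix t assume t: "t \<in> {1..T}"
      have p: "1 + e * g t > 0" using gpos[OF t] e0 by (auto intro: add_pos_nonneg)
      have "e * tm e t = \<theta> * \<alpha> t * (1 - \<theta> * (1 - g t)) * (1 - g t)"
        unfolding tm_def ce using p A(2) by (simp add: e_def divide_simps power2_eq_square)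
      also have "\<dots> = \<theta> * (\<alpha> t - \<beta> t) - \<theta>\<^sup>2 * ((\<beta> t)\<^sup>2 / \<alpha> t - 2 * \<beta> t + \<alpha> t)"
        using A(3)[OF t] by (simp add: g_def field_simps power2_eq_square)
      finally show "e * tm e t = \<dots>" .
    qed
    also have "\<dots> = \<theta> * ((\<Sum>t=1..T. \<alpha> t) - (\<Sum>t=1..T. \<beta> t)) - \<theta>\<^sup>2 * ((\<Sum>t=1..T. (\<beta> t)\<^sup>2 / \<alpha> t) - 2 * (\<Sum>t=1..T. \<beta> t) + (\<Sum>t=1..T. \<alpha> t))"
      by (simp add: sum_subtractf sum.distrib sum_distrib_left right_diff_distrib distrib_left)
    also have "\<dots> = - \<theta>\<^sup>2 * ((\<Sum>t=1..T. (\<beta> t)\<^sup>2 / \<alpha> t) - 1)"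
      unfolding A(5,6) by (simp add: algebra_simps)
    finally show ?thesis by (simp add: U C_def)
  qed
  have L: "((\<lambda>\<eta>. upsilon_market T \<alpha> \<beta> \<theta> \<eta>) \<longlongrightarrow>
            C + (\<Sum>t=1..T. \<alpha> t * (1 - \<theta> * (1 - g t))\<^sup>2 * (1 - g t) / g t)) at_top"
  proof -
    have "((\<lambda>\<eta>. C + (\<Sum>t=1..T. \<eta> * tm \<eta> t)) \<longlongrightarrow>
            C + (\<Sum>t=1..T. \<alpha> t * (1 - \<theta> * (1 - g t))\<^sup>2 * (1 - g t) / g t)) at_top"
    proof (intro tendsto_add tendsto_const tendsto_sum)
      fix t assume t: "t \<in> {1..T}"
      define K where "K = \<alpha> t * (1 - \<theta> * (1 - g t))\<^sup>2 * (1 - g t)"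
      have i0: "((\<lambda>\<eta>::real. inverse \<eta>) \<longlongrightarrow> 0) at_top"
        by (rule tendsto_inverse_0_at_top[OF filterlim_ident])
      have "((\<lambda>\<eta>::real. K / (inverse \<eta> + g t)) \<longlongrightarrow> K / (0 + g t)) at_top"
        using gpos[OF t] by (intro tendsto_intros i0) auto
      moreover have "\<forall>\<^sub>F \<eta> in at_top. K / (inverse \<eta> + g t) = \<eta> * tm \<eta> t"
        using eventually_gt_at_top[of "0::real"]
      proof eventually_elim
        case (elim \<eta>)
        have "1 + \<eta> * g t > 0" using gpos[OF t] elim by (auto intro: add_pos_nonneg)
        then show ?case using elim unfolding tm_def K_def by (simp add: field_simps)
      qed
      ultimately show "((\<lambda>\<eta>. \<eta> * tm \<eta> t) \<longlongrightarrow> \<alpha> t * (1 - \<theta> * (1 - g t))\<^sup>2 * (1 - g t) / g t) at_top"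
        unfolding K_def by (simp add: tendsto_cong)
    qed
    thus ?thesis by (simp add: U)
  qed
  have Lv: "C + (\<Sum>t=1..T. \<alpha> t * (1 - \<theta> * (1 - g t))\<^sup>2 * (1 - g t) / g t)
        = 1 + (1-\<theta>)\<^sup>2 * ((\<Sum>t=1..T. (\<alpha> t)\<^sup>2 / \<beta> t) - 1)"
  proof -
    have "(\<Sum>t=1..T. \<alpha> t * (1 - \<theta> * (1 - g t))\<^sup>2 * (1 - g t) / g t)
      = (\<Sum>t=1..T. (1-\<theta>)\<^sup>2 * ((\<alpha> t)\<^sup>2 / \<beta> t - \<alpha> t) + 2*\<theta>*(1-\<theta>) * (\<alpha> t - \<beta> t)
            + \<theta>\<^sup>2 * (\<beta> t - (\<beta> t)\<^sup>2 / \<alpha> t))"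
    proof (rule sum.cong[OF refl])
      fix t assume t: "t \<in> {1..T}"
      show "\<alpha> t * (1 - \<theta> * (1 - g t))\<^sup>2 * (1 - g t) / g t = (1-\<theta>)\<^sup>2 * ((\<alpha> t)\<^sup>2 / \<beta> t - \<alpha> t) + 2*\<theta>*(1-\<theta>) * (\<alpha> t - \<beta> t)
            + \<theta>\<^sup>2 * (\<beta> t - (\<beta> t)\<^sup>2 / \<alpha> t)"
        using A(3)[OF t] A(4)[OF t] unfolding g_def
        by (simp add: divide_simps power2_eq_square) (simp add: algebra_simps)
    qed
    also have "\<dots> = (1-\<theta>)\<^sup>2 * ((\<Sum>t=1..T. (\<alpha> t)\<^sup>2 / \<beta> t) - (\<Sum>t=1..T. \<alpha> t)) + 2*\<theta>*(1-\<theta>) * ((\<Sum>t=1..T. \<alpha> t) - (\<Sum>t=1..T. \<beta> t))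
            + \<theta>\<^sup>2 * ((\<Sum>t=1..T. \<beta> t) - (\<Sum>t=1..T. (\<beta> t)\<^sup>2 / \<alpha> t))"
      by (simp add: sum_subtractf sum.distrib sum_distrib_left right_diff_distrib distrib_left)
    also have "\<dots> = (1-\<theta>)\<^sup>2 * ((\<Sum>t=1..T. (\<alpha> t)\<^sup>2 / \<beta> t) - 1) - \<theta>\<^sup>2 * ((\<Sum>t=1..T. (\<beta> t)\<^sup>2 / \<alpha> t) - 1)"
      unfolding A(5,6) by (simp add: algebra_simps)
    finally show ?thesis by (simp add: C_def)
  qed
  show ?thesis
    using P1 P2 V0 Ve L Lv unfolding e_def[symmetric] C_def[symmetric] by auto
qed

end
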